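(* Let $0<\nu\le 1$. Let $C\in\mathcal M_N(\mathbb C)$ be a $K$-banded circulant matrix, i.e. $C=\sum_{\ell=-K}^{K} c_\ell Q^\ell$ with $c_\ell\in\mathbb C$, where $Q$ is the $N\times N$ cyclic permutation matrix, and let $\kappa_C=\|C\|\,\|C^{-1}\|$. Let $\mathbf b\in\mathbb C^N$ be a normalized vector ($\|\mathbf b\|=1$). Then there exists a truncation threshold $T\in\mathcal O\!\left(K\cdot\kappa_C\log\frac{\kappa_C}{\nu}\right)$ such that, writing $\tilde x(\alpha)=\sum_{m=-T}^{T}\alpha_m Q^m\mathbf b$ for $\alpha=(\alpha_m)_{m=-T}^{T}\in\mathbb C^{2T+1}$, an optimal parameter set $\alpha$ exists and $$\min_{\alpha\in\mathbb C^{2T+1}}\|C\tilde x(\alpha)-\mathbf b\|^2\le\min_{x\in\mathbb C^N}\|Cx-\mathbf b\|^2+\nu .$$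
   Context: $Q\in\mathcal M_N(\mathbb R)$ is the cyclic permutation matrix with $Q_{i+1,i}=1$ for $i=0,\dots,N-2$, $Q_{0,N-1}=1$ and all other entries $0$ (so $Q\mathbf e_i=\mathbf e_{i+1 \bmod N}$); negative powers $Q^{-\ell}=Q^{N-\ell}$. A circulant matrix is $C=\sum_{\ell=0}^{N-1}c_\ell Q^\ell$; it is called $K$-banded (the paper takes $K\in\mathcal O(\operatorname{poly}\log N)$) if $c_{K+1}=\dots=c_{N-K-1}=0$, and one writes $c_{-\ell}:=c_{N-\ell}$ so that $C=\sum_{\ell=-K}^{K}c_\ell Q^\ell$. $\|\cdot\|$ denotes the Euclidean norm on vectors and the spectral norm on matrices; $C^{-1}$ denotes the (Moore–Penrose) pseudoinverse, so $\|C^{-1}\|=1/\sigma_{\min}(C)$ with $\sigma_{\min}(C)$ the smallest nonzero singular value, and $\kappa_C=\sigma_{\max}(C)/\sigma_{\min}(C)$. *)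

theory Defs
  imports "Jordan_Normal_Form.Schur_Decomposition"
begin

definition vnorm :: "complex vec \<Rightarrow> real" where
  "vnorm v = sqrt (\<Sum>i<dim_vec v. (cmod (v $ i))\<^sup>2)"

text \<open>The power Q^m (m an integer) of the N x N cyclic permutation matrix with
  Q e_i = e_(i+1 mod N); entry (i,j) is 1 iff i = j + m (mod N).\<close>
definition Qpow :: "nat \<Rightarrow> int \<Rightarrow> complex mat" where
  "Qpow N m = mat N N (\<lambda>(i,j). if int i mod int N = (int j + m) mod int N then 1 else 0)"

definition circ :: "nat \<Rightarrow> nat \<Rightarrow> (int \<Rightarrow> complex) \<Rightarrow> complex mat" where
  "circ N K c = mat N N (\<lambda>(i,j). \<Sum>l\<in>{-int K..int K}. c l * (Qpow N l $$ (i,j)))"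

definition singular_values :: "complex mat \<Rightarrow> real set" where
  "singular_values C = {sqrt (Re mu) | mu. eigenvalue (mat_adjoint C * C) mu}"

definition sigma_max :: "complex mat \<Rightarrow> real" where
  "sigma_max C = Max (singular_values C)"

definition sigma_min :: "complex mat \<Rightarrow> real" where
  "sigma_min C = Min (singular_values C - {0})"

text \<open>Condition number kappa_C = sigma_max / sigma_min = norm C * norm (pseudoinverse C).\<close>
definition cond_num :: "complex mat \<Rightarrow> real" where
  "cond_num C = sigma_max C / sigma_min C"

definition ansatz :: "nat \<Rightarrow> nat \<Rightarrow> (int \<Rightarrow> complex) \<Rightarrow> complex vec \<Rightarrow> complex vec" where
  "ansatz N T \<alpha> b = vec N (\<lambda>i. \<Sum>m\<in>{-int T..int T}. \<alpha> m * ((Qpow N m *\<^sub>v b) $ i))"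

end

theory Submission
  imports Defs
begin

definition wN :: "nat \<Rightarrow> int \<Rightarrow> complex" where
  "wN N n = cis (2 * pi * of_int n / of_nat N)"

lemma wN_add: "wN N (a + b) = wN N a * wN N b"
  by (simp add: wN_def cis_mult add_divide_distrib distrib_left)

lemma wN_0[simp]: "wN N 0 = 1"
  by (simp add: wN_def)

lemma wN_cnj: "cnj (wN N a) = wN N (-a)"
  by (simp add: wN_def cis_cnj)

lemma wN_norm[simp]: "norm (wN N a) = 1"
  by (simp add: wN_def)

lemma wN_minus: "wN N (-a) * wN N a = 1"
  by (metis add.left_inverse wN_0 wN_add)

lemma wN_NK: "N > 0 \<Longrightarrow> wN N (int N * k) = 1"
proof -
  assume "N > 0"
  then have "2 * pi * of_int (int N * k) / of_nat N = 2 * pi * of_int k" by simp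
  then show ?thesis unfolding wN_def by simp
qed

lemma wN_mod: assumes "N > 0" "a mod int N = b mod int N" shows "wN N a = wN N b"
proof -
  have "int N dvd a - b" using assms(2) by (simp add: mod_eq_dvd_iff)
  then obtain k where "a = b + int N * k" by (metis add.commute diff_add_cancel dvdE)
  then show ?thesis using wN_NK[OF assms(1)] by (simp add: wN_add)
qed

lemma wN_pow: "wN N a ^ n = wN N (a * int n)"
  by (induction n) (simp_all add: wN_add distrib_left algebra_simps)

lemma wN_ne1: assumes "0 < n" "n < int N" shows "wN N n \<noteq> 1"
proof
  assume "wN N n = 1"
  then have "cos (2 * pi * of_int n / of_nat N) = 1"
    unfolding wN_def by (metis Re_complex_of_real cis.sel(1) one_complex.sel(1))
  then have "\<exists>k::int. 2 * pi * of_int n / of_nat N = real_of_int k * 2 * pi"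
    using cos_one_2pi_int by blast
  then obtain k :: int where k: "2 * pi * of_int n / of_nat N = real_of_int k * 2 * pi"
    by blast
  have N: "real N > 0" using assms by simp
  then have "real_of_int n = real_of_int k * real N" using k by (simp add: field_simps)
  then have "n = k * int N" by (metis of_int_eq_iff of_int_mult of_int_of_nat_eq)
  show False
  proof (cases "k \<le> 0")
    case True
    then have "k * int N \<le> 0" by (simp add: mult_nonpos_nonneg)
    then show False using assms \<open>n = k * int N\<close> by simp
  next
    case False
    then have "k * int N \<ge> 1 * int N" by (intro mult_right_mono) auto
    then show False using assms \<open>n = k * int N\<close> by linarith
  qed
qed

lemma geom_root_sum: fixes z :: complex assumes "z ^ N = 1" "z \<noteq> 1"
  shows "(\<Sum>j<N. z ^ j) = 0"
  using assms by (simp add: sum_gp_strict)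

lemma wN_orth: assumes "i < N" "k < N"
  shows "(\<Sum>j<N. wN N (int k * int j) * wN N (- (int i * int j))) = (if i = k then of_nat N else 0)"
proof -
  have N: "N > 0" using assms by simp
  let ?z = "wN N (int k - int i)"
  have eq: "\<And>j. wN N (int k * int j) * wN N (- (int i * int j)) = ?z ^ j"
    by (simp add: wN_pow wN_add[symmetric] algebra_simps)
  show ?thesis
  proof (cases "i = k")
    case True
    have "\<And>j. wN N (int k * int j) * wN N (- (int i * int j)) = 1"
      using True wN_minus by (simp add: mult.commute)
    then show ?thesis using True by simp
  next
    case False
    have "?z ^ N = wN N (int N * (int k - int i))" by (simp add: wN_pow mult.commute)
    also have "\<dots> = 1" by (rule wN_NK[OF N])
    finally have zN: "?z ^ N = 1" .
    have "?z \<noteq> 1"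
    proof (cases "i < k")
      case True then show ?thesis using wN_ne1[of "int k - int i" N] assms by simp
    next
      case False
      then have "i > k" using \<open>i \<noteq> k\<close> by simp
      have "?z = wN N (int k - int i + int N)"
        using wN_NK[OF N, of 1] by (simp add: wN_add)
      then show ?thesis using wN_ne1[of "int k - int i + int N" N] assms \<open>i > k\<close> by simp
    qed
    then show ?thesis using False by (simp add: eq geom_root_sum[OF zN])
  qed
qed

definition dft :: "nat \<Rightarrow> (nat \<Rightarrow> complex) \<Rightarrow> nat \<Rightarrow> complex" where
  "dft N f j = (\<Sum>i<N. f i * wN N (- (int i * int j)))"

lemma parseval_ip:
  "(\<Sum>j<N. dft N f j * cnj (dft N g j)) = of_nat N * (\<Sum>i<N. f i * cnj (g i))"
proof -
  have "(\<Sum>j<N. dft N f j * cnj (dft N g j))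
     = (\<Sum>j<N. \<Sum>i<N. \<Sum>k<N. f i * cnj (g k) * (wN N (int k * int j) * wN N (- (int i * int j))))"
    unfolding dft_def by (simp add: cnj_sum sum_product wN_cnj mult_ac)
  also have "\<dots> = (\<Sum>i<N. \<Sum>j<N. \<Sum>k<N. f i * cnj (g k) * (wN N (int k * int j) * wN N (- (int i * int j))))"
    by (rule sum.swap)
  also have "\<dots> = (\<Sum>i<N. \<Sum>k<N. \<Sum>j<N. f i * cnj (g k) * (wN N (int k * int j) * wN N (- (int i * int j))))"
    by (rule sum.cong[OF refl], rule sum.swap)
  also have "\<dots> = (\<Sum>i<N. \<Sum>k<N. f i * cnj (g k) * (if i = k then of_nat N else 0))"
    by (intro sum.cong refl) (simp add: sum_distrib_left[symmetric] wN_orth)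
  also have "\<dots> = (\<Sum>i<N. f i * cnj (g i) * of_nat N)"
    by (simp add: if_distrib cong: if_cong)
  finally show ?thesis by (simp add: sum_distrib_left algebra_simps)
qed

lemma parseval:
  "(\<Sum>j<N. (cmod (dft N f j))\<^sup>2) = real N * (\<Sum>i<N. (cmod (f i))\<^sup>2)"
proof -
  have h: "\<And>z::complex. (cmod z)\<^sup>2 = Re (z * cnj z)" by (simp add: complex_mult_cnj cmod_power2)
  have "(\<Sum>j<N. (cmod (dft N f j))\<^sup>2) = Re (\<Sum>j<N. dft N f j * cnj (dft N f j))"
    by (simp add: h Re_sum)
  also have "\<dots> = Re (of_nat N * (\<Sum>i<N. f i * cnj (f i)))" using parseval_ip[of N f f] by simp
  also have "\<dots> = real N * (\<Sum>i<N. (cmod (f i))\<^sup>2)" by (simp add: h Re_sum)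
  finally show ?thesis .
qed

lemma dft_zero_imp: assumes "\<And>j. j < N \<Longrightarrow> dft N f j = 0" "i < N" shows "f i = 0"
proof -
  have "real N * (\<Sum>i<N. (cmod (f i))\<^sup>2) = 0" using parseval[of N f] assms(1) by simp
  then have "(\<Sum>i<N. (cmod (f i))\<^sup>2) = 0" using assms(2) by simp
  then have "(cmod (f i))\<^sup>2 = 0" using assms(2) sum_nonneg_eq_0_iff[of "{..<N}" "\<lambda>i. (cmod (f i))\<^sup>2"] by simp
  then show ?thesis by simp
qed

lemma mult_vec_idx: "A \<in> carrier_mat N N \<Longrightarrow> x \<in> carrier_vec N \<Longrightarrow> i < N \<Longrightarrow>
   (A *\<^sub>v x) $ i = (\<Sum>k<N. A $$ (i,k) * x $ k)"
  by (simp add: scalar_prod_def lessThan_atLeast0)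

lemma dft_mult:
  assumes A: "A \<in> carrier_mat N N" and x: "x \<in> carrier_vec N"
    and col: "\<And>k. k < N \<Longrightarrow> (\<Sum>i<N. A $$ (i,k) * wN N (- (int i * int j))) = \<mu> * wN N (- (int k * int j))"
  shows "dft N (($) (A *\<^sub>v x)) j = \<mu> * dft N (($) x) j"
proof -
  have "dft N (($) (A *\<^sub>v x)) j = (\<Sum>i<N. (\<Sum>k<N. A $$ (i,k) * x $ k) * wN N (- (int i * int j)))"
    unfolding dft_def by (intro sum.cong refl) (simp add: mult_vec_idx[OF A x])
  also have "\<dots> = (\<Sum>i<N. \<Sum>k<N. x $ k * (A $$ (i,k) * wN N (- (int i * int j))))"
    by (simp add: sum_distrib_right sum_distrib_left mult_ac)
  also have "\<dots> = (\<Sum>k<N. \<Sum>i<N. x $ k * (A $$ (i,k) * wN N (- (int i * int j))))"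
    by (rule sum.swap)
  also have "\<dots> = (\<Sum>k<N. x $ k * (\<mu> * wN N (- (int k * int j))))"
    by (intro sum.cong refl) (simp add: sum_distrib_left[symmetric] col)
  also have "\<dots> = \<mu> * dft N (($) x) j"
    unfolding dft_def by (simp add: sum_distrib_left mult_ac)
  finally show ?thesis .
qed

lemma delta1: assumes "N > 0"
  shows "(\<Sum>i<N. (if int i = a mod int N then 1 else 0) * (f i::complex)) = f (nat (a mod int N))"
proof -
  have "(\<Sum>i<N. (if int i = a mod int N then 1 else 0) * f i)
      = (\<Sum>i<N. if i = nat (a mod int N) then f i else 0)"
  proof (intro sum.cong refl)
    fix i assume "i \<in> {..<N}"
    have "a mod int N \<ge> 0" using assms by simp
    then have "(int i = a mod int N) = (i = nat (a mod int N))" by auto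
    then show "(if int i = a mod int N then 1 else 0) * f i = (if i = nat (a mod int N) then f i else 0)"
      by auto
  qed
  also have "\<dots> = f (nat (a mod int N))"
    using assms by (simp add: sum.delta nat_less_iff)
  finally show ?thesis .
qed

lemma wN_natmod: assumes "N > 0" shows "wN N (- (int (nat (a mod int N)) * b)) = wN N (- (a * b))"
proof -
  have "int (nat (a mod int N)) = a mod int N" using assms by simp
  moreover have "(- (a mod int N * b)) mod int N = (- (a * b)) mod int N"
    by (metis mod_minus_eq mod_mult_left_eq)
  ultimately show ?thesis using wN_mod[OF assms] by metis
qed

lemma Qpow_carrier[simp]: "Qpow N m \<in> carrier_mat N N"
  by (simp add: Qpow_def)

lemma Qpow_idx: "i < N \<Longrightarrow> k < N \<Longrightarrow> Qpow N m $$ (i,k) = (if int i mod int N = (int k + m) mod int N then 1 else 0)"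
  by (simp add: Qpow_def)

lemma delta_w: assumes N: "N > 0"
  shows "(\<Sum>i<N. if int i = a mod int N then g * wN N (- (int i * int j)) else 0) = g * wN N (- (a * int j))"
proof -
  have "(\<Sum>i<N. if int i = a mod int N then g * wN N (- (int i * int j)) else 0)
      = (\<Sum>i<N. (if int i = a mod int N then 1 else 0) * (g * wN N (- (int i * int j))))"
    by (intro sum.cong refl) simp
  also have "\<dots> = g * wN N (- (int (nat (a mod int N)) * int j))"
    by (rule delta1[OF N])
  also have "wN N (- (int (nat (a mod int N)) * int j)) = wN N (- (a * int j))"
    by (rule wN_natmod[OF N])
  finally show ?thesis .
qed

lemma Qpow_col: assumes "k < N"
  shows "(\<Sum>i<N. Qpow N m $$ (i,k) * wN N (- (int i * int j))) = wN N (- (m * int j)) * wN N (- (int k * int j))"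
proof -
  have N: "N > 0" using assms by simp
  have "(\<Sum>i<N. Qpow N m $$ (i,k) * wN N (- (int i * int j)))
    = (\<Sum>i<N. if int i = (int k + m) mod int N then 1 * wN N (- (int i * int j)) else 0)"
    using assms by (intro sum.cong refl) (simp add: Qpow_idx)
  also have "\<dots> = 1 * wN N (- ((int k + m) * int j))"
    by (rule delta_w[OF N])
  also have "\<dots> = wN N (- (m * int j)) * wN N (- (int k * int j))"
    by (simp add: wN_add[symmetric] algebra_simps)
  finally show ?thesis .
qed

definition lam :: "nat \<Rightarrow> nat \<Rightarrow> (int \<Rightarrow> complex) \<Rightarrow> nat \<Rightarrow> complex" where
  "lam N K c j = (\<Sum>l\<in>{-int K..int K}. c l * wN N (- (l * int j)))"

lemma circ_carrier[simp]: "circ N K c \<in> carrier_mat N N"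
  by (simp add: circ_def)

lemma circ_idx: "i < N \<Longrightarrow> k < N \<Longrightarrow> circ N K c $$ (i,k) =
   (\<Sum>l\<in>{-int K..int K}. c l * (if int i mod int N = (int k + l) mod int N then 1 else 0))"
  by (simp add: circ_def Qpow_idx)

lemma circ_col: assumes "k < N"
  shows "(\<Sum>i<N. circ N K c $$ (i,k) * wN N (- (int i * int j))) = lam N K c j * wN N (- (int k * int j))"
proof -
  have "(\<Sum>i<N. circ N K c $$ (i,k) * wN N (- (int i * int j)))
     = (\<Sum>i<N. \<Sum>l\<in>{-int K..int K}. c l * (Qpow N l $$ (i,k) * wN N (- (int i * int j))))"
    using assms by (intro sum.cong refl) (simp add: circ_def sum_distrib_right sum_distrib_left mult_ac)
  also have "\<dots> = (\<Sum>l\<in>{-int K..int K}. \<Sum>i<N. c l * (Qpow N l $$ (i,k) * wN N (- (int i * int j))))"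
    by (rule sum.swap)
  also have "\<dots> = (\<Sum>l\<in>{-int K..int K}. c l * (wN N (- (l * int j)) * wN N (- (int k * int j))))"
    by (intro sum.cong refl) (simp add: sum_distrib_left[symmetric] Qpow_col[OF assms])
  also have "\<dots> = lam N K c j * wN N (- (int k * int j))"
    unfolding lam_def by (simp add: sum_distrib_right sum_distrib_left mult_ac)
  finally show ?thesis .
qed

lemma adj_idx: assumes "A \<in> carrier_mat N N" "i < N" "k < N"
  shows "mat_adjoint A $$ (i,k) = cnj (A $$ (k,i))"
  using assms unfolding mat_adjoint_def
  by (simp add: mat_of_rows_index conjugate_vec_def)

lemma adj_carrier[simp]: assumes "A \<in> carrier_mat N N" shows "mat_adjoint A \<in> carrier_mat N N"
  using assms unfolding mat_adjoint_def carrier_mat_def by auto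

lemma cond_swap0: "(int k mod int N = (int i + l) mod int N) = (int i mod int N = (int k - l) mod int N)"
proof -
  have e: "int k - (int i + l) = - (int i - (int k - l))" by simp
  show ?thesis unfolding mod_eq_dvd_iff e dvd_minus_iff ..
qed

lemma cond_swap: "i < N \<Longrightarrow> k < N \<Longrightarrow> (int k = (int i + l) mod int N) = (int i = (int k - l) mod int N)"
proof -
  assume a: "i < N" "k < N"
  have "int k mod int N = int k" "int i mod int N = int i" using a by simp_all
  then show ?thesis using cond_swap0[of k N i l] by metis
qed

lemma adj_circ_idx: assumes "i < N" "k < N"
  shows "mat_adjoint (circ N K c) $$ (i,k) = (\<Sum>l\<in>{-int K..int K}. if int i = (int k - l) mod int N then cnj (c l) else 0)"
proof -
  have "mat_adjoint (circ N K c) $$ (i,k) = cnj (circ N K c $$ (k,i))"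
    by (rule adj_idx[OF circ_carrier assms])
  also have "\<dots> = cnj (\<Sum>l\<in>{-int K..int K}. c l * (if int k mod int N = (int i + l) mod int N then 1 else 0))"
    using assms by (simp only: circ_idx)
  also have "\<dots> = (\<Sum>l\<in>{-int K..int K}. if int k mod int N = (int i + l) mod int N then cnj (c l) else 0)"
    unfolding cnj_sum by (intro sum.cong refl) simp
  also have "\<dots> = (\<Sum>l\<in>{-int K..int K}. if int i = (int k - l) mod int N then cnj (c l) else 0)"
  proof -
    have "int i mod int N = int i" using assms by simp
    then show ?thesis by (simp only: cond_swap0)
  qed
  finally show ?thesis .
qed

lemma if_mult0: "(if P then a else 0) * (b::complex) = (if P then a * b else 0)"
  by simp

lemma adj_circ_col: assumes "k < N"
  shows "(\<Sum>i<N. mat_adjoint (circ N K c) $$ (i,k) * wN N (- (int i * int j))) = cnj (lam N K c j) * wN N (- (int k * int j))"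
proof -
  have N: "N > 0" using assms by simp
  have "(\<Sum>i<N. mat_adjoint (circ N K c) $$ (i,k) * wN N (- (int i * int j)))
     = (\<Sum>i<N. \<Sum>l\<in>{-int K..int K}. if int i = (int k - l) mod int N then cnj (c l) * wN N (- (int i * int j)) else 0)"
  proof (intro sum.cong refl)
    fix i assume "i \<in> {..<N}"
    then have i: "i < N" by simp
    show "mat_adjoint (circ N K c) $$ (i,k) * wN N (- (int i * int j)) = (\<Sum>l\<in>{-int K..int K}. if int i = (int k - l) mod int N then cnj (c l) * wN N (- (int i * int j)) else 0)"
      by (simp only: adj_circ_idx[OF i assms] sum_distrib_right if_mult0)
  qed
  also have "\<dots> = (\<Sum>l\<in>{-int K..int K}. \<Sum>i<N. if int i = (int k - l) mod int N then cnj (c l) * wN N (- (int i * int j)) else 0)"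
    by (rule sum.swap)
  also have "\<dots> = (\<Sum>l\<in>{-int K..int K}. cnj (c l) * wN N (- ((int k - l) * int j)))"
    by (intro sum.cong refl delta_w[OF N])
  also have "\<dots> = (\<Sum>l\<in>{-int K..int K}. cnj (c l) * wN N (l * int j) * wN N (- (int k * int j)))"
  proof (intro sum.cong refl)
    fix l
    have "- ((int k - l) * int j) = l * int j + - (int k * int j)" by (simp add: algebra_simps)
    then show "cnj (c l) * wN N (- ((int k - l) * int j)) = cnj (c l) * wN N (l * int j) * wN N (- (int k * int j))"
      by (simp only: wN_add mult.assoc)
  qed
  also have "\<dots> = (\<Sum>l\<in>{-int K..int K}. cnj (c l) * wN N (l * int j)) * wN N (- (int k * int j))"
    by (simp only: sum_distrib_right)
  also have "\<dots> = cnj (lam N K c j) * wN N (- (int k * int j))"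
    unfolding lam_def by (simp add: cnj_sum wN_cnj)
  finally show ?thesis .
qed

lemma dft_circ: assumes x: "x \<in> carrier_vec N"
  shows "dft N (($) (circ N K c *\<^sub>v x)) j = lam N K c j * dft N (($) x) j"
proof -
  have col: "\<And>k. k < N \<Longrightarrow> (\<Sum>i<N. circ N K c $$ (i,k) * wN N (- (int i * int j))) = lam N K c j * wN N (- (int k * int j))"
    by (rule circ_col)
  show ?thesis by (rule dft_mult[OF circ_carrier x col])
qed

lemma dft_adj_circ: assumes x: "x \<in> carrier_vec N"
  shows "dft N (($) (mat_adjoint (circ N K c) *\<^sub>v x)) j = cnj (lam N K c j) * dft N (($) x) j"
proof -
  have col: "\<And>k. k < N \<Longrightarrow> (\<Sum>i<N. mat_adjoint (circ N K c) $$ (i,k) * wN N (- (int i * int j))) = cnj (lam N K c j) * wN N (- (int k * int j))"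
    by (rule adj_circ_col)
  show ?thesis by (rule dft_mult[OF adj_carrier[OF circ_carrier] x col])
qed

lemma dft_Qpow: assumes x: "x \<in> carrier_vec N"
  shows "dft N (($) (Qpow N m *\<^sub>v x)) j = wN N (- (m * int j)) * dft N (($) x) j"
proof -
  have col: "\<And>k. k < N \<Longrightarrow> (\<Sum>i<N. Qpow N m $$ (i,k) * wN N (- (int i * int j))) = wN N (- (m * int j)) * wN N (- (int k * int j))"
    by (rule Qpow_col)
  show ?thesis by (rule dft_mult[OF Qpow_carrier x col])
qed

lemma dft_sum: "finite S \<Longrightarrow> dft N (\<lambda>i. \<Sum>m\<in>S. g m i) j = (\<Sum>m\<in>S. dft N (g m) j)"
  unfolding dft_def by (simp add: sum_distrib_right sum.swap[of _ S])

lemma dft_scale: "dft N (\<lambda>i. a * f i) j = a * dft N f j"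
  unfolding dft_def by (simp add: sum_distrib_left mult_ac)

lemma dft_diff: "dft N (\<lambda>i. f i - g i) j = dft N f j - dft N g j"
  unfolding dft_def by (simp add: sum_subtractf left_diff_distrib)

definition amp :: "nat \<Rightarrow> nat \<Rightarrow> (int \<Rightarrow> complex) \<Rightarrow> nat \<Rightarrow> complex" where
  "amp N T \<alpha> j = (\<Sum>m\<in>{-int T..int T}. \<alpha> m * wN N (- (m * int j)))"

lemma ansatz_carrier[simp]: "ansatz N T \<alpha> b \<in> carrier_vec N"
  by (simp add: ansatz_def)

lemma dft_ansatz: assumes "b \<in> carrier_vec N"
  shows "dft N (($) (ansatz N T \<alpha> b)) j = amp N T \<alpha> j * dft N (($) b) j"
proof -
  have "dft N (($) (ansatz N T \<alpha> b)) j = dft N (\<lambda>i. \<Sum>m\<in>{-int T..int T}. \<alpha> m * (Qpow N m *\<^sub>v b) $ i) j"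
    unfolding dft_def ansatz_def by (intro sum.cong refl) simp
  also have "\<dots> = (\<Sum>m\<in>{-int T..int T}. \<alpha> m * dft N (($) (Qpow N m *\<^sub>v b)) j)"
    by (simp add: dft_sum dft_scale)
  also have "\<dots> = amp N T \<alpha> j * dft N (($) b) j"
    unfolding amp_def using assms by (simp add: dft_Qpow sum_distrib_left mult_ac)
  finally show ?thesis .
qed

lemma dft_cong: "(\<And>i. i < N \<Longrightarrow> f i = g i) \<Longrightarrow> dft N f j = dft N g j"
  unfolding dft_def by (intro sum.cong refl) simp

lemma vnorm_sq: "v \<in> carrier_vec N \<Longrightarrow> (vnorm v)\<^sup>2 = (\<Sum>i<N. (cmod (v $ i))\<^sup>2)"
  unfolding vnorm_def by (simp add: sum_nonneg)

lemma vnorm_dft: assumes "v \<in> carrier_vec N" "N > 0"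
  shows "(vnorm v)\<^sup>2 = (\<Sum>j<N. (cmod (dft N (($) v) j))\<^sup>2) / real N"
  using parseval[of N "($) v"] vnorm_sq[OF assms(1)] assms(2) by simp

lemma circ_mult_carrier[simp]: "circ N K c *\<^sub>v x \<in> carrier_vec N"
proof -
  have "dim_row (circ N K c) = N" using circ_carrier by (rule carrier_matD)
  then show ?thesis by (simp only: carrier_vec_def mem_Collect_eq dim_mult_mat_vec)
qed

lemma dim_adj_circ[simp]: "dim_row (mat_adjoint (circ N K c)) = N" "dim_col (mat_adjoint (circ N K c)) = N"
  by (rule carrier_matD[OF adj_carrier[OF circ_carrier]])+

lemma dim_circ[simp]: "dim_row (circ N K c) = N" "dim_col (circ N K c) = N"
  by (rule carrier_matD[OF circ_carrier])+

lemma resid_dft: assumes x: "x \<in> carrier_vec N" and b: "b \<in> carrier_vec N" and N: "N > 0"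
  shows "(vnorm (circ N K c *\<^sub>v x - b))\<^sup>2
     = (\<Sum>j<N. (cmod (lam N K c j * dft N (($) x) j - dft N (($) b) j))\<^sup>2) / real N"
proof -
  have cv: "circ N K c *\<^sub>v x - b \<in> carrier_vec N" using x b by simp
  have "\<And>j. dft N (($) (circ N K c *\<^sub>v x - b)) j = lam N K c j * dft N (($) x) j - dft N (($) b) j"
  proof -
    fix j
    have "dft N (($) (circ N K c *\<^sub>v x - b)) j = dft N (\<lambda>i. (circ N K c *\<^sub>v x) $ i - b $ i) j"
      using x b by (intro dft_cong) simp
    also have "\<dots> = lam N K c j * dft N (($) x) j - dft N (($) b) j"
      by (simp add: dft_diff dft_circ[OF x])
    finally show "dft N (($) (circ N K c *\<^sub>v x - b)) j = lam N K c j * dft N (($) x) j - dft N (($) b) j" .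
  qed
  then show ?thesis using vnorm_dft[OF cv N] by simp
qed

lemma dft_adj_circ_circ: assumes "x \<in> carrier_vec N"
  shows "dft N (($) ((mat_adjoint (circ N K c) * circ N K c) *\<^sub>v x)) j
     = of_real ((cmod (lam N K c j))\<^sup>2) * dft N (($) x) j"
proof -
  have "(mat_adjoint (circ N K c) * circ N K c) *\<^sub>v x = mat_adjoint (circ N K c) *\<^sub>v (circ N K c *\<^sub>v x)"
    by (rule assoc_mult_mat_vec[OF adj_carrier[OF circ_carrier] circ_carrier assms])
  then have "dft N (($) ((mat_adjoint (circ N K c) * circ N K c) *\<^sub>v x)) j
      = cnj (lam N K c j) * (lam N K c j * dft N (($) x) j)"
    using assms by (simp add: dft_adj_circ dft_circ)
  then show ?thesis using complex_norm_square[of "lam N K c j"] by (simp add: mult_ac)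
qed

lemma vec_eq_dft: assumes "u \<in> carrier_vec N" "v \<in> carrier_vec N"
  and "\<And>j. j < N \<Longrightarrow> dft N (($) u) j = dft N (($) v) j"
shows "u = v"
proof (rule eq_vecI)
  show "dim_vec u = dim_vec v" using assms by simp
  fix i assume "i < dim_vec v"
  then have i: "i < N" using assms by simp
  have "\<And>j. j < N \<Longrightarrow> dft N (\<lambda>i. u $ i - v $ i) j = 0"
    using assms(3) by (simp add: dft_diff)
  from dft_zero_imp[of N "\<lambda>i. u $ i - v $ i", OF this i]
  show "u $ i = v $ i" by simp
qed

lemma eig_char: assumes "eigenvalue (mat_adjoint (circ N K c) * circ N K c) mu"
  shows "\<exists>j<N. mu = of_real ((cmod (lam N K c j))\<^sup>2)"
proof -
  let ?A = "mat_adjoint (circ N K c) * circ N K c"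
  have Ac: "?A \<in> carrier_mat N N" by (simp add: mult_carrier_mat[of _ N N])
  obtain v where v: "v \<in> carrier_vec N" "v \<noteq> 0\<^sub>v N" "?A *\<^sub>v v = mu \<cdot>\<^sub>v v"
    using assms Ac unfolding eigenvalue_def eigenvector_def by auto
  have "\<exists>j<N. dft N (($) v) j \<noteq> 0"
  proof (rule ccontr)
    assume "\<not> ?thesis"
    then have "\<And>i. i < N \<Longrightarrow> v $ i = 0" using dft_zero_imp[of N "($) v"] by auto
    then have "v = 0\<^sub>v N" using v(1) by (intro eq_vecI) auto
    then show False using v(2) by simp
  qed
  then obtain j where j: "j < N" "dft N (($) v) j \<noteq> 0" by blast
  have "dft N (($) (?A *\<^sub>v v)) j = dft N (($) (mu \<cdot>\<^sub>v v)) j" using v(3) by simp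
  also have "dft N (($) (mu \<cdot>\<^sub>v v)) j = dft N (\<lambda>i. mu * v $ i) j"
    using v(1) by (intro dft_cong) simp
  finally have "of_real ((cmod (lam N K c j))\<^sup>2) * dft N (($) v) j = mu * dft N (($) v) j"
    using dft_adj_circ_circ[OF v(1)] by (simp add: dft_scale)
  then show ?thesis using j by auto
qed

lemma eig_exists: assumes j: "j < N"
  shows "eigenvalue (mat_adjoint (circ N K c) * circ N K c) (of_real ((cmod (lam N K c j))\<^sup>2))"
proof -
  let ?A = "mat_adjoint (circ N K c) * circ N K c"
  let ?mu = "complex_of_real ((cmod (lam N K c j))\<^sup>2)"
  have Ac: "?A \<in> carrier_mat N N" by (simp add: mult_carrier_mat[of _ N N])
  define e where "e = vec N (\<lambda>i. wN N (int i * int j))"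
  have ec: "e \<in> carrier_vec N" unfolding e_def by simp
  have E: "dft N (($) e) k = (if k = j then of_nat N else 0)" if k: "k < N" for k
  proof -
    have "dft N (($) e) k = (\<Sum>i<N. wN N (int j * int i) * wN N (- (int k * int i)))"
      unfolding dft_def e_def by (intro sum.cong refl) (simp add: mult.commute)
    then show ?thesis using wN_orth[OF k j] by auto
  qed
  have "?A *\<^sub>v e = ?mu \<cdot>\<^sub>v e"
  proof (rule vec_eq_dft[of _ N])
    show "?A *\<^sub>v e \<in> carrier_vec N" using Ac ec by simp
    show "?mu \<cdot>\<^sub>v e \<in> carrier_vec N" using ec by simp
    fix k assume k: "k < N"
    have "dft N (($) (?mu \<cdot>\<^sub>v e)) k = dft N (\<lambda>i. ?mu * e $ i) k"
      using ec by (intro dft_cong) simp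
    then show "dft N (($) (?A *\<^sub>v e)) k = dft N (($) (?mu \<cdot>\<^sub>v e)) k"
      using dft_adj_circ_circ[OF ec, of K c k] E[OF k] by (simp add: dft_scale)
  qed
  moreover have "e \<noteq> 0\<^sub>v N"
  proof
    assume "e = 0\<^sub>v N"
    then have "e $ 0 = 0" using j by simp
    then show False using j unfolding e_def by simp
  qed
  ultimately show ?thesis unfolding eigenvalue_def eigenvector_def using ec Ac by auto
qed

lemma singular_values_circ: assumes "N > 0"
  shows "singular_values (circ N K c) = (\<lambda>j. cmod (lam N K c j)) ` {..<N}"
proof
  show "singular_values (circ N K c) \<subseteq> (\<lambda>j. cmod (lam N K c j)) ` {..<N}"
  proof
    fix s assume "s \<in> singular_values (circ N K c)"
    then obtain mu where s: "s = sqrt (Re mu)" "eigenvalue (mat_adjoint (circ N K c) * circ N K c) mu"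
      unfolding singular_values_def by auto
    then obtain j where j: "j < N" "mu = of_real ((cmod (lam N K c j))\<^sup>2)" using eig_char by blast
    then have "s = cmod (lam N K c j)" using s(1) by simp
    then show "s \<in> (\<lambda>j. cmod (lam N K c j)) ` {..<N}" using j(1) by (intro rev_image_eqI[of j]) simp_all
  qed
  show "(\<lambda>j. cmod (lam N K c j)) ` {..<N} \<subseteq> singular_values (circ N K c)"
  proof
    fix s assume "s \<in> (\<lambda>j. cmod (lam N K c j)) ` {..<N}"
    then obtain j where j: "j < N" "s = cmod (lam N K c j)" by auto
    have "s = sqrt (Re (complex_of_real ((cmod (lam N K c j))\<^sup>2)))" using j by simp
    then have "\<exists>mu. s = sqrt (Re mu) \<and> eigenvalue (mat_adjoint (circ N K c) * circ N K c) mu"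
      using eig_exists[OF j(1)] by (intro exI conjI)
    then show "s \<in> singular_values (circ N K c)"
      unfolding singular_values_def by (simp only: mem_Collect_eq)
  qed
qed

lemma circ_nonzero_lam: assumes "circ N K c \<noteq> 0\<^sub>m N N"
  shows "\<exists>j<N. lam N K c j \<noteq> 0"
proof (rule ccontr)
  assume "\<not> ?thesis"
  then have z: "\<And>j. j < N \<Longrightarrow> lam N K c j = 0" by auto
  have "circ N K c = 0\<^sub>m N N"
  proof (rule eq_matI)
    fix i k assume ik: "i < dim_row (0\<^sub>m N N :: complex mat)" "k < dim_col (0\<^sub>m N N :: complex mat)"
    then have i: "i < N" and k: "k < N" by auto
    have u: "unit_vec N k \<in> carrier_vec N" by simp
    have "circ N K c *\<^sub>v unit_vec N k = 0\<^sub>v N"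
    proof (rule vec_eq_dft[of _ N])
      fix j assume j: "j < N"
      have "dft N (($) (circ N K c *\<^sub>v unit_vec N k)) j = 0" using dft_circ[OF u] z[OF j] by simp
      moreover have "dft N (($) (0\<^sub>v N)) j = 0" unfolding dft_def by simp
      ultimately show "dft N (($) (circ N K c *\<^sub>v unit_vec N k)) j = dft N (($) (0\<^sub>v N)) j" by simp
    qed (use u in auto)
    then have "(circ N K c *\<^sub>v unit_vec N k) $ i = 0" using i by simp
    moreover have "(circ N K c *\<^sub>v unit_vec N k) $ i = circ N K c $$ (i,k)"
      using i k by simp
    ultimately show "circ N K c $$ (i,k) = 0\<^sub>m N N $$ (i,k)" using i k by simp
  qed auto
  then show False using assms by simp
qed

definition LP :: "nat \<Rightarrow> nat \<Rightarrow> (nat \<Rightarrow> complex) \<Rightarrow> bool" where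
  "LP N T f \<longleftrightarrow> (\<exists>\<alpha>. \<forall>j<N. f j = amp N T \<alpha> j)"

lemma LP_cong: "LP N T f \<Longrightarrow> (\<And>j. j < N \<Longrightarrow> f j = g j) \<Longrightarrow> LP N T g"
  unfolding LP_def by auto

lemma LP_mono: assumes "LP N T f" "T \<le> T'" shows "LP N T' f"
proof -
  obtain \<alpha> where a: "\<forall>j<N. f j = amp N T \<alpha> j" using assms unfolding LP_def by auto
  define \<beta> where "\<beta> = (\<lambda>m. if m \<in> {-int T..int T} then \<alpha> m else 0)"
  have "amp N T' \<beta> j = amp N T \<alpha> j" for j
  proof -
    have "amp N T' \<beta> j = (\<Sum>m\<in>{-int T'..int T'}. if m \<in> {-int T..int T} then \<alpha> m * wN N (-(m*int j)) else 0)"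
      unfolding amp_def \<beta>_def by (intro sum.cong refl) simp
    also have "\<dots> = (\<Sum>m\<in>{-int T'..int T'} \<inter> {-int T..int T}. \<alpha> m * wN N (-(m*int j)))"
      by (rule sum.inter_restrict[symmetric]) simp
    also have "{-int T'..int T'} \<inter> {-int T..int T} = {-int T..int T}" using assms(2) by auto
    finally show ?thesis unfolding amp_def .
  qed
  then show ?thesis unfolding LP_def using a by metis
qed

lemma LP_add: assumes "LP N T f" "LP N T g" shows "LP N T (\<lambda>j. f j + g j)"
proof -
  obtain \<alpha> where a: "\<forall>j<N. f j = amp N T \<alpha> j" using assms unfolding LP_def by auto
  obtain \<beta> where b: "\<forall>j<N. g j = amp N T \<beta> j" using assms unfolding LP_def by auto
  have "amp N T (\<lambda>m. \<alpha> m + \<beta> m) j = amp N T \<alpha> j + amp N T \<beta> j" for j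
    unfolding amp_def by (simp add: sum.distrib distrib_right)
  then show ?thesis unfolding LP_def using a b by metis
qed

lemma LP_scale: assumes "LP N T f" shows "LP N T (\<lambda>j. a * f j)"
proof -
  obtain \<alpha> where al: "\<forall>j<N. f j = amp N T \<alpha> j" using assms unfolding LP_def by auto
  have "amp N T (\<lambda>m. a * \<alpha> m) j = a * amp N T \<alpha> j" for j
    unfolding amp_def by (simp add: sum_distrib_left mult.assoc)
  then show ?thesis unfolding LP_def using al by metis
qed

lemma LP_zero: "LP N T (\<lambda>j. 0)"
  unfolding LP_def by (rule exI[of _ "\<lambda>m. 0"]) (simp add: amp_def)

lemma LP_sum: assumes "finite S" "\<And>s. s \<in> S \<Longrightarrow> LP N T (g s)"
  shows "LP N T (\<lambda>j. \<Sum>s\<in>S. g s j)"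
  using assms
proof (induction S rule: finite_induct)
  case empty then show ?case by (simp add: LP_zero)
next
  case (insert x F)
  have "LP N T (\<lambda>j. g x j + (\<Sum>s\<in>F. g s j))"
    using insert by (intro LP_add) auto
  then show ?case using insert by simp
qed

lemma LP_mono1: assumes "\<bar>m\<bar> \<le> int T" shows "LP N T (\<lambda>j. wN N (- (m * int j)))"
proof -
  have "amp N T (\<lambda>m'. if m' = m then 1 else 0) j = wN N (- (m * int j))" for j
  proof -
    have "amp N T (\<lambda>m'. if m' = m then 1 else 0) j = (\<Sum>m'\<in>{-int T..int T}. if m' = m then wN N (- (m' * int j)) else 0)"
      unfolding amp_def by (intro sum.cong refl) simp
    also have "\<dots> = wN N (- (m * int j))" using assms by (simp add: sum.delta abs_le_iff)
    finally show ?thesis .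
  qed
  then show ?thesis unfolding LP_def by metis
qed

lemma LP_const: "LP N T (\<lambda>j. a)"
proof -
  have "LP N T (\<lambda>j. wN N (- (0 * int j)))" by (rule LP_mono1) simp
  then have "LP N T (\<lambda>j. a * wN N (- (0 * int j)))" by (rule LP_scale)
  then show ?thesis by simp
qed

lemma LP_diff: assumes "LP N T f" "LP N T g" shows "LP N T (\<lambda>j. f j - g j)"
proof -
  have "LP N T (\<lambda>j. f j + (-1) * g j)" using assms by (intro LP_add LP_scale)
  then show ?thesis by simp
qed

lemma LP_mult: assumes "LP N T1 f" "LP N T2 g" shows "LP N (T1 + T2) (\<lambda>j. f j * g j)"
proof -
  obtain \<alpha> where a: "\<forall>j<N. f j = amp N T1 \<alpha> j" using assms unfolding LP_def by auto
  obtain \<beta> where b: "\<forall>j<N. g j = amp N T2 \<beta> j" using assms unfolding LP_def by auto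
  have eq: "f j * g j = (\<Sum>m\<in>{-int T1..int T1}. \<Sum>n\<in>{-int T2..int T2}. (\<alpha> m * \<beta> n) * wN N (- ((m + n) * int j)))"
    if j: "j < N" for j
  proof -
    have "f j * g j = amp N T1 \<alpha> j * amp N T2 \<beta> j" using a b j by simp
    also have "\<dots> = (\<Sum>m\<in>{-int T1..int T1}. \<Sum>n\<in>{-int T2..int T2}. (\<alpha> m * wN N (- (m * int j))) * (\<beta> n * wN N (- (n * int j))))"
      unfolding amp_def by (rule sum_product)
    also have "\<dots> = (\<Sum>m\<in>{-int T1..int T1}. \<Sum>n\<in>{-int T2..int T2}. (\<alpha> m * \<beta> n) * wN N (- ((m + n) * int j)))"
      by (intro sum.cong refl) (simp add: wN_add[symmetric] algebra_simps)
    finally show ?thesis .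
  qed
  have "LP N (T1 + T2) (\<lambda>j. \<Sum>m\<in>{-int T1..int T1}. \<Sum>n\<in>{-int T2..int T2}. (\<alpha> m * \<beta> n) * wN N (- ((m + n) * int j)))"
    by (intro LP_sum LP_scale LP_mono1) auto
  then show ?thesis by (rule LP_cong) (simp add: eq)
qed

lemma LP_lam: "LP N K (lam N K c)"
  unfolding LP_def lam_def amp_def by blast

lemma LP_cnj_lam: "LP N K (\<lambda>j. cnj (lam N K c j))"
proof -
  have "LP N K (\<lambda>j. \<Sum>l\<in>{-int K..int K}. cnj (c l) * wN N (- ((- l) * int j)))"
    by (intro LP_sum LP_scale LP_mono1) auto
  then show ?thesis by (rule LP_cong) (simp add: lam_def cnj_sum wN_cnj)
qed

lemma LP_t: "LP N (2 * K) (\<lambda>j. complex_of_real ((cmod (lam N K c j))\<^sup>2))"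
proof -
  have "LP N (K + K) (\<lambda>j. lam N K c j * cnj (lam N K c j))"
    by (rule LP_mult[OF LP_lam LP_cnj_lam])
  then have a: "LP N (2 * K) (\<lambda>j. lam N K c j * cnj (lam N K c j))"
    by (simp add: mult_2)
  show ?thesis by (rule LP_cong[OF a], rule complex_norm_square[symmetric])
qed

fun cheb :: "nat \<Rightarrow> real \<Rightarrow> real" where
  "cheb 0 x = 1"
| "cheb (Suc 0) x = x"
| "cheb (Suc (Suc n)) x = 2 * x * cheb (Suc n) x - cheb n x"

fun chS :: "real \<Rightarrow> real \<Rightarrow> nat \<Rightarrow> real \<Rightarrow> real" where
  "chS u0 g 0 t = 0"
| "chS u0 g (Suc 0) t = g"
| "chS u0 g (Suc (Suc n)) t = 2 * u0 * chS u0 g (Suc n) t + 2 * g * cheb (Suc n) (u0 - g * t) - chS u0 g n t"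

lemma chS_id: "t * chS u0 g n t = cheb n u0 - cheb n (u0 - g * t)"
proof (induction u0 g n t rule: chS.induct)
  case (3 u0 g n t)
  have "t * chS u0 g (Suc (Suc n)) t = 2*u0*(t * chS u0 g (Suc n) t) + 2*g*t*cheb (Suc n) (u0 - g*t) - t * chS u0 g n t"
    by (simp add: algebra_simps)
  also have "\<dots> = 2*u0*(cheb (Suc n) u0 - cheb (Suc n) (u0 - g*t)) + 2*g*t*cheb (Suc n) (u0 - g*t) - (cheb n u0 - cheb n (u0 - g*t))"
    using 3 by simp
  also have "\<dots> = cheb (Suc (Suc n)) u0 - cheb (Suc (Suc n)) (u0 - g*t)" by (simp add: algebra_simps)
  finally show ?case .
qed (simp_all add: algebra_simps)

lemma nat_2step: assumes "P 0" "P (Suc 0)" "\<And>n. P n \<Longrightarrow> P (Suc n) \<Longrightarrow> P (Suc (Suc n))"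
  shows "P n"
proof -
  have "P n \<and> P (Suc n)" by (induction n) (use assms in auto)
  then show ?thesis by simp
qed

lemma cheb_cos: "cheb n (cos \<theta>) = cos (real n * \<theta>)"
proof (induction n rule: nat_2step)
  case (3 n)
  define a where "a = real (Suc n) * \<theta>"
  have e: "cos (a + \<theta>) = 2 * cos \<theta> * cos a - cos (a - \<theta>)" by (simp add: cos_add cos_diff)
  have e1: "real (Suc (Suc n)) * \<theta> = a + \<theta>" unfolding a_def by (simp add: algebra_simps)
  have e2: "real n * \<theta> = a - \<theta>" unfolding a_def by (simp add: algebra_simps)
  have "cheb (Suc (Suc n)) (cos \<theta>) = 2 * cos \<theta> * cheb (Suc n) (cos \<theta>) - cheb n (cos \<theta>)"
    by (simp only: cheb.simps)
  also have "\<dots> = 2 * cos \<theta> * cos (real (Suc n) * \<theta>) - cos (real n * \<theta>)"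
    by (simp only: 3)
  also have "\<dots> = cos (real (Suc (Suc n)) * \<theta>)"
    by (simp only: e1 e2 a_def[symmetric] e)
  finally show ?case .
qed simp_all

lemma cheb_bound: assumes "\<bar>x\<bar> \<le> 1" shows "\<bar>cheb n x\<bar> \<le> 1"
proof -
  have "x = cos (arccos x)" using assms by (simp add: cos_arccos)
  then have "cheb n x = cos (real n * arccos x)" by (metis cheb_cos)
  then show ?thesis by simp
qed

lemma cheb_rs: assumes "r * s = 1" shows "cheb n ((r + s) / 2) = (r ^ n + s ^ n) / 2"
proof (induction n rule: nat_2step)
  case (3 n)
  have "r * s ^ Suc n = (r * s) * s ^ n" by (simp add: power_Suc algebra_simps)
  then have e1: "r * s ^ Suc n = s ^ n" using assms by simp
  have "s * r ^ Suc n = (r * s) * r ^ n" by (simp add: power_Suc algebra_simps)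
  then have e2: "s * r ^ Suc n = r ^ n" using assms by simp
  have "cheb (Suc (Suc n)) ((r + s) / 2) = 2 * ((r + s) / 2) * cheb (Suc n) ((r + s) / 2) - cheb n ((r + s) / 2)"
    by (simp only: cheb.simps)
  also have "\<dots> = 2 * ((r + s) / 2) * ((r ^ Suc n + s ^ Suc n) / 2) - (r ^ n + s ^ n) / 2"
    by (simp only: 3)
  also have "\<dots> = (r * r ^ Suc n + s * s ^ Suc n + r * s ^ Suc n + s * r ^ Suc n - r ^ n - s ^ n) / 2"
    by (simp add: field_simps)
  also have "\<dots> = (r * r ^ Suc n + s * s ^ Suc n) / 2" by (simp only: e1 e2) simp
  also have "\<dots> = (r ^ Suc (Suc n) + s ^ Suc (Suc n)) / 2" by (simp only: power_Suc)
  finally show ?case .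
qed simp_all

lemma LP_cheb: assumes "LP N D (\<lambda>j. complex_of_real (x j))"
  shows "LP N (D * n) (\<lambda>j. complex_of_real (cheb n (x j)))"
proof (induction n rule: nat_2step)
  case 1 then show ?case by (simp add: LP_const)
next
  case 2 then show ?case using assms by simp
next
  case (3 n)
  have a: "LP N (D + D * Suc n) (\<lambda>j. complex_of_real (x j) * complex_of_real (cheb (Suc n) (x j)))"
    using assms 3 by (intro LP_mult)
  have b: "LP N (D + D * Suc n) (\<lambda>j. complex_of_real (cheb n (x j)))"
    using 3(1) by (rule LP_mono) (simp add: algebra_simps)
  have "LP N (D + D * Suc n) (\<lambda>j. 2 * (complex_of_real (x j) * complex_of_real (cheb (Suc n) (x j))) - complex_of_real (cheb n (x j)))"
    using a b by (intro LP_diff LP_scale)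
  then have "LP N (D + D * Suc n) (\<lambda>j. complex_of_real (cheb (Suc (Suc n)) (x j)))"
    by (rule LP_cong) simp
  then show ?case by (simp add: algebra_simps)
qed

lemma LP_chS: assumes "LP N D (\<lambda>j. complex_of_real (u0 - g * t j))"
  shows "LP N (D * n) (\<lambda>j. complex_of_real (chS u0 g n (t j)))"
proof (induction n rule: nat_2step)
  case 1 then show ?case by (simp add: LP_const)
next
  case 2 then show ?case by (simp add: LP_const)
next
  case (3 n)
  have a: "LP N (D * Suc (Suc n)) (\<lambda>j. complex_of_real (chS u0 g (Suc n) (t j)))"
    using 3(2) by (rule LP_mono) simp
  have b: "LP N (D * Suc (Suc n)) (\<lambda>j. complex_of_real (chS u0 g n (t j)))"
    using 3(1) by (rule LP_mono) simp
  have c: "LP N (D * Suc (Suc n)) (\<lambda>j. complex_of_real (cheb (Suc n) (u0 - g * t j)))"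
    using LP_cheb[OF assms, of "Suc n"] by (rule LP_mono) simp
  have "LP N (D * Suc (Suc n)) (\<lambda>j. (2 * complex_of_real u0) * complex_of_real (chS u0 g (Suc n) (t j))
        + (2 * complex_of_real g) * complex_of_real (cheb (Suc n) (u0 - g * t j)) - complex_of_real (chS u0 g n (t j)))"
    using a b c by (intro LP_diff LP_add LP_scale)
  then show ?case by (rule LP_cong) simp
qed

definition ip :: "nat \<Rightarrow> (nat \<Rightarrow> complex) \<Rightarrow> (nat \<Rightarrow> complex) \<Rightarrow> complex" where
  "ip N f g = (\<Sum>i<N. f i * cnj (g i))"

definition nrm :: "nat \<Rightarrow> (nat \<Rightarrow> complex) \<Rightarrow> real" where
  "nrm N f = (\<Sum>i<N. (cmod (f i))\<^sup>2)"

lemma nrm_ip: "nrm N f = Re (ip N f f)"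
  unfolding nrm_def ip_def by (simp add: Re_sum complex_mult_cnj cmod_power2)

lemma ip_diff_left: "ip N (\<lambda>i. f i - a * g i) h = ip N f h - a * ip N g h"
  unfolding ip_def by (simp add: sum_subtractf sum_distrib_left algebra_simps)

lemma ip_add_left: "ip N (\<lambda>i. f i + g i) h = ip N f h + ip N g h"
  unfolding ip_def by (simp add: sum.distrib algebra_simps)

lemma ip_add_right: "ip N f (\<lambda>i. g i + h i) = ip N f g + ip N f h"
  unfolding ip_def by (simp add: sum.distrib algebra_simps)

lemma ip_sum_right: "finite I \<Longrightarrow> ip N f (\<lambda>i. \<Sum>m\<in>I. \<eta> m * U m i) = (\<Sum>m\<in>I. cnj (\<eta> m) * ip N f (U m))"
  unfolding ip_def by (simp add: cnj_sum sum_distrib_left sum_distrib_right sum.swap[of _ I] mult_ac)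

lemma ip_cong_right: "(\<And>i. i < N \<Longrightarrow> g i = h i) \<Longrightarrow> ip N f g = ip N f h"
  unfolding ip_def by (intro sum.cong refl) simp

lemma ip_cnj: "ip N g f = cnj (ip N f g)"
  unfolding ip_def by (simp add: cnj_sum mult.commute)

lemma nrm_zero: assumes "ip N v v = 0" "i < N" shows "v i = 0"
proof -
  have "nrm N v = 0" using assms nrm_ip by simp
  then have "(\<Sum>i<N. (cmod (v i))\<^sup>2) = 0" unfolding nrm_def .
  then have "(cmod (v i))\<^sup>2 = 0" using assms(2) sum_nonneg_eq_0_iff[of "{..<N}" "\<lambda>i. (cmod (v i))\<^sup>2"] by simp
  then show ?thesis by simp
qed

lemma orth_exists:
  assumes "finite I"
  shows "\<exists>\<beta>. \<forall>m\<in>I. ip N (\<lambda>i. y i - (\<Sum>k\<in>I. \<beta> k * U k i)) (U m) = 0"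
  using assms
proof (induction I arbitrary: y rule: finite_induct)
  case empty then show ?case by simp
next
  case (insert k I)
  obtain \<beta> where b: "\<forall>m\<in>I. ip N (\<lambda>i. y i - (\<Sum>k\<in>I. \<beta> k * U k i)) (U m) = 0"
    using insert.IH by blast
  obtain \<eta> where e: "\<forall>m\<in>I. ip N (\<lambda>i. U k i - (\<Sum>k\<in>I. \<eta> k * U k i)) (U m) = 0"
    using insert.IH by blast
  define r where "r = (\<lambda>i. y i - (\<Sum>k\<in>I. \<beta> k * U k i))"
  define v where "v = (\<lambda>i. U k i - (\<Sum>k\<in>I. \<eta> k * U k i))"
  have Uk: "U k i = v i + (\<Sum>k\<in>I. \<eta> k * U k i)" for i unfolding v_def by simp
  have perp_span: "ip N f (\<lambda>i. \<Sum>k\<in>I. \<eta> k * U k i) = 0" if "\<forall>m\<in>I. ip N f (U m) = 0" for f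
    using that insert.hyps(1) by (simp add: ip_sum_right)
  show ?case
  proof (cases "ip N v v = 0")
    case True
    have v0: "\<And>i. i < N \<Longrightarrow> U k i = (\<Sum>k\<in>I. \<eta> k * U k i)"
      using nrm_zero[OF True] Uk by simp
    define \<beta>' where "\<beta>' = \<beta>(k := 0)"
    have s: "(\<Sum>m\<in>insert k I. \<beta>' m * U m i) = (\<Sum>m\<in>I. \<beta> m * U m i)" for i
    proof -
      have "(\<Sum>m\<in>I. \<beta>' m * U m i) = (\<Sum>m\<in>I. \<beta> m * U m i)"
        using insert.hyps(2) by (intro sum.cong refl) (auto simp: \<beta>'_def)
      moreover have "\<beta>' k = 0" by (simp add: \<beta>'_def)
      ultimately show ?thesis using insert.hyps by simp
    qed
    have "ip N r (U k) = ip N r (\<lambda>i. \<Sum>k\<in>I. \<eta> k * U k i)"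
      by (rule ip_cong_right) (simp add: v0)
    also have "\<dots> = 0" using b perp_span unfolding r_def by blast
    finally have "ip N r (U k) = 0" .
    then show ?thesis using b unfolding r_def by (intro exI[of _ \<beta>']) (simp add: s)
  next
    case False
    define a where "a = ip N r v / ip N v v"
    define \<beta>' where "\<beta>' = (\<lambda>m. if m = k then a else \<beta> m - a * \<eta> m)"
    have s: "y i - (\<Sum>m\<in>insert k I. \<beta>' m * U m i) = r i - a * v i" for i
    proof -
      have "(\<Sum>m\<in>I. \<beta>' m * U m i) = (\<Sum>m\<in>I. \<beta> m * U m i - a * (\<eta> m * U m i))"
        using insert.hyps by (intro sum.cong refl) (auto simp: \<beta>'_def algebra_simps)
      then have "(\<Sum>m\<in>insert k I. \<beta>' m * U m i) = a * U k i + (\<Sum>m\<in>I. \<beta> m * U m i) - a * (\<Sum>m\<in>I. \<eta> m * U m i)"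
        using insert.hyps by (simp add: \<beta>'_def sum_subtractf sum_distrib_left)
      then show ?thesis unfolding r_def v_def by (simp add: algebra_simps)
    qed
    have "ip N (\<lambda>i. r i - a * v i) v = ip N r v - a * ip N v v" by (rule ip_diff_left)
    also have "\<dots> = 0" using False unfolding a_def by simp
    finally have rv: "ip N (\<lambda>i. r i - a * v i) v = 0" .
    have rI: "\<forall>m\<in>I. ip N (\<lambda>i. r i - a * v i) (U m) = 0"
      using b e unfolding r_def v_def by (simp add: ip_diff_left)
    have "ip N (\<lambda>i. r i - a * v i) (U k) = ip N (\<lambda>i. r i - a * v i) (\<lambda>i. v i + (\<Sum>k\<in>I. \<eta> k * U k i))"
      by (rule ip_cong_right) (rule Uk)
    also have "\<dots> = 0" using rv perp_span[OF rI] by (simp add: ip_add_right)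
    finally have "ip N (\<lambda>i. r i - a * v i) (U k) = 0" .
    then show ?thesis using rI by (intro exI[of _ \<beta>']) (simp add: s)
  qed
qed

lemma nrm_nonneg: "0 \<le> nrm N f"
  unfolding nrm_def by (simp add: sum_nonneg)

lemma lsq_exists:
  assumes "finite I"
  shows "\<exists>\<beta>. \<forall>\<gamma>. nrm N (\<lambda>i. y i - (\<Sum>k\<in>I. \<beta> k * U k i)) \<le> nrm N (\<lambda>i. y i - (\<Sum>k\<in>I. \<gamma> k * U k i))"
proof -
  obtain \<beta> where b: "\<forall>m\<in>I. ip N (\<lambda>i. y i - (\<Sum>k\<in>I. \<beta> k * U k i)) (U m) = 0"
    using orth_exists[OF assms] by blast
  define r where "r = (\<lambda>i. y i - (\<Sum>k\<in>I. \<beta> k * U k i))"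
  have "nrm N r \<le> nrm N (\<lambda>i. y i - (\<Sum>k\<in>I. \<gamma> k * U k i))" for \<gamma>
  proof -
    define w where "w = (\<lambda>i. \<Sum>k\<in>I. (\<beta> k - \<gamma> k) * U k i)"
    have eq: "y i - (\<Sum>k\<in>I. \<gamma> k * U k i) = r i + w i" for i
    proof -
      have "w i = (\<Sum>k\<in>I. \<beta> k * U k i) - (\<Sum>k\<in>I. \<gamma> k * U k i)"
        unfolding w_def by (simp add: left_diff_distrib sum_subtractf)
      then show ?thesis unfolding r_def by simp
    qed
    have rw: "ip N r w = 0"
    proof -
      have "ip N r w = (\<Sum>m\<in>I. cnj (\<beta> m - \<gamma> m) * ip N r (U m))"
        unfolding w_def by (rule ip_sum_right[OF assms])
      also have "\<dots> = 0" using b unfolding r_def by simp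
      finally show ?thesis .
    qed
    have wr: "ip N w r = 0" using ip_cnj[of N w r] rw by simp
    have "nrm N (\<lambda>i. r i + w i) = Re (ip N r r) + Re (ip N w w)"
      unfolding nrm_ip ip_add_left ip_add_right rw wr by simp
    also have "\<dots> = nrm N r + nrm N w" by (simp add: nrm_ip)
    finally have "nrm N (\<lambda>i. r i + w i) = nrm N r + nrm N w" .
    moreover have "(\<lambda>i. y i - (\<Sum>k\<in>I. \<gamma> k * U k i)) = (\<lambda>i. r i + w i)"
      using eq by (rule ext)
    ultimately show ?thesis using nrm_nonneg[of N w] by simp
  qed
  then show ?thesis unfolding r_def by blast
qed

lemma cheb_approx:
  fixes m M \<nu> t :: real
  assumes m: "0 < m" "m \<le> M" and nu: "0 < \<nu>" and t: "m\<^sup>2 \<le> t" "t \<le> M\<^sup>2"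
    and d: "real d \<ge> (M/m) * ln (4/\<nu>)"
    and u0_def: "u0 = (4*M\<^sup>2 + m\<^sup>2)/(4*M\<^sup>2 - m\<^sup>2)" and g_def: "g = 2/(4*M\<^sup>2 - m\<^sup>2)"
  shows "cheb d u0 > 0" "(cheb d (u0 - g*t) / cheb d u0)\<^sup>2 \<le> \<nu>"
proof -
  have Mpos: "M > 0" using m by simp
  have "m\<^sup>2 \<le> M\<^sup>2" using m by (intro power_mono) auto
  then have den: "4*M\<^sup>2 - m\<^sup>2 > 0" using Mpos by (simp add: power2_eq_square) (smt (verit) mult_pos_pos Mpos)
  have dm: "2*M - m > 0" "2*M + m > 0" using m by auto
  define r where "r = (2*M+m)/(2*M-m)"
  define s where "s = (2*M-m)/(2*M+m)"
  have rpos: "r > 0" and spos: "s > 0" using dm by (simp_all add: r_def s_def)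
  have rs: "r * s = 1" using dm by (simp add: r_def s_def)
  have u0r: "u0 = (r + s) / 2"
  proof -
    have e: "(2*M-m)*(2*M+m) = 4*M\<^sup>2 - m\<^sup>2" by (simp add: power2_eq_square algebra_simps)
    have "r + s = ((2*M+m)*(2*M+m) + (2*M-m)*(2*M-m)) / ((2*M-m)*(2*M+m))"
      unfolding r_def s_def using dm by (intro add_frac_eq) auto
    also have "(2*M+m)*(2*M+m) + (2*M-m)*(2*M-m) = 2 * (4*M\<^sup>2 + m\<^sup>2)"
      by (simp add: power2_eq_square algebra_simps)
    finally have "r + s = 2 * (4*M\<^sup>2 + m\<^sup>2) / (4*M\<^sup>2 - m\<^sup>2)" by (simp only: e)
    then have "r + s = 2 * ((4*M\<^sup>2 + m\<^sup>2) / (4*M\<^sup>2 - m\<^sup>2))" by (simp only: times_divide_eq_right)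
    moreover obtain X where X: "X = (4*M\<^sup>2 + m\<^sup>2) / (4*M\<^sup>2 - m\<^sup>2)" by blast
    ultimately have "r + s = 2 * X" by simp
    then have rsX: "(r + s) / 2 = X" by simp
    show ?thesis unfolding u0_def X[symmetric] rsX ..
  qed
  have chu: "cheb d u0 = (r^d + s^d)/2" unfolding u0r by (rule cheb_rs[OF rs])
  have chge: "cheb d u0 \<ge> r^d / 2" using chu spos by simp
  have rdpos: "r^d > 0" using rpos by simp
  show chpos: "cheb d u0 > 0" using chge rdpos by linarith
  have xeq: "u0 - g*t = (4*M\<^sup>2 + m\<^sup>2 - 2*t)/(4*M\<^sup>2 - m\<^sup>2)"
  proof -
    have gen: "\<And>A Y t::real. Y \<noteq> 0 \<Longrightarrow> A / Y - 2 / Y * t = (A - 2*t)/Y" by (simp add: field_simps)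
    show ?thesis unfolding u0_def g_def using den by (intro gen) simp
  qed
  have "4*M\<^sup>2 + m\<^sup>2 - 2*t \<le> 4*M\<^sup>2 - m\<^sup>2" using t by simp
  moreover have "-(4*M\<^sup>2 - m\<^sup>2) \<le> 4*M\<^sup>2 + m\<^sup>2 - 2*t" using t zero_le_power2[of M] by linarith
  ultimately have "\<bar>u0 - g*t\<bar> \<le> 1" unfolding xeq using den
    by (simp add: abs_le_iff divide_le_eq le_divide_eq)
  then have cb: "\<bar>cheb d (u0 - g*t)\<bar> \<le> 1" by (rule cheb_bound)
  define y where "y = m / (2*M)"
  have y: "0 < y" "y < 1" using m Mpos by (simp_all add: y_def field_simps)
  have ry: "r = (1 + y) / (1 - y)" using Mpos dm by (simp add: r_def y_def field_simps)
  have "exp (-y) \<ge> 1 - y" using exp_ge_add_one_self[of "-y"] by simp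
  then have "exp y \<le> 1 / (1 - y)" using y by (simp add: exp_minus field_simps)
  also have "\<dots> \<le> (1 + y) / (1 - y)" using y by (simp add: divide_right_mono)
  finally have rexp: "exp y \<le> r" using ry by simp
  have "exp (real d * y) = exp y ^ d" by (simp add: exp_of_nat_mult)
  also have "\<dots> \<le> r ^ d" using rexp by (intro power_mono) auto
  finally have rd: "exp (real d * y) \<le> r ^ d" .
  have "real d * y * 2 = real d * m / M" using Mpos by (simp add: y_def field_simps)
  moreover have "real d * m / M \<ge> ln (4/\<nu>)"
  proof -
    have "real d * m / M \<ge> (M/m) * ln (4/\<nu>) * m / M"
      using d m Mpos by (intro divide_right_mono mult_right_mono) auto
    also have "(M/m) * ln (4/\<nu>) * m / M = ln (4/\<nu>)" using m Mpos by (simp add: field_simps)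
    finally show ?thesis .
  qed
  ultimately have "exp (real d * y * 2) \<ge> 4/\<nu>" using nu by (metis exp_ln exp_le_cancel_iff zero_less_divide_iff zero_less_numeral)
  moreover have "exp (real d * y * 2) = exp (real d * y) * exp (real d * y)" by (simp add: exp_add[symmetric])
  moreover have "exp (real d * y) * exp (real d * y) \<le> r^d * r^d" using rd rdpos by (intro mult_mono) auto
  ultimately have r2: "r^d * r^d \<ge> 4/\<nu>" by linarith
  have "1/\<nu> \<le> (r^d * r^d) / 4" using r2 nu by (simp add: field_simps)
  also have "\<dots> = (r^d/2)\<^sup>2" by (simp add: power2_eq_square)
  also have "\<dots> \<le> (cheb d u0)\<^sup>2" using chge rdpos by (intro power_mono) auto
  finally have q2: "(cheb d u0)\<^sup>2 \<ge> 1/\<nu>" .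
  have c2: "(cheb d (u0 - g*t))\<^sup>2 \<le> 1" using cb by (simp only: abs_square_le_1)
  have "(cheb d (u0 - g*t) / cheb d u0)\<^sup>2 = (cheb d (u0 - g*t))\<^sup>2 / (cheb d u0)\<^sup>2"
    by (simp add: power_divide)
  also have "\<dots> \<le> 1 / (cheb d u0)\<^sup>2" using c2 chpos by (intro divide_right_mono) auto
  also have "\<dots> \<le> 1 / (1/\<nu>)" using q2 nu chpos by (intro divide_left_mono) auto
  also have "\<dots> = \<nu>" by simp
  finally show "(cheb d (u0 - g*t) / cheb d u0)\<^sup>2 \<le> \<nu>" .
qed

lemma T_bound:
  fixes \<kappa> \<nu> :: real
  assumes k: "\<kappa> \<ge> 1" and nu: "0 < \<nu>" "\<nu> \<le> 1"
  shows "real (K + 2*K*nat \<lceil>\<kappa> * ln (4/\<nu>)\<rceil>) \<le> 9 * real K * (\<kappa> * ln (\<kappa>/\<nu>) + 1)"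
proof -
  define x where "x = \<kappa> * ln (4/\<nu>)"
  define L where "L = \<kappa> * ln (\<kappa>/\<nu>)"
  have l4: "ln 4 \<le> (3::real)" using ln_le_minus_one[of 4] by simp
  have lnu: "ln \<nu> \<le> 0" using nu by simp
  have x_eq: "x = \<kappa> * ln 4 - \<kappa> * ln \<nu>" unfolding x_def using nu by (simp add: ln_div algebra_simps)
  have L_eq: "L = \<kappa> * ln \<kappa> - \<kappa> * ln \<nu>" unfolding L_def using nu k by (simp add: ln_div algebra_simps)
  have "ln (1/\<kappa>) \<le> 1/\<kappa> - 1" using k by (intro ln_le_minus_one) simp
  then have "- ln \<kappa> \<le> 1/\<kappa> - 1" using k by (simp add: ln_div)
  then have "\<kappa> * (- ln \<kappa>) \<le> \<kappa> * (1/\<kappa> - 1)" using k by (intro mult_left_mono) auto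
  then have klk: "\<kappa> * ln \<kappa> \<ge> \<kappa> - 1" using k by (simp add: algebra_simps)
  have "\<kappa> * ln \<nu> \<le> 0" using k lnu by (simp add: mult_nonneg_nonpos)
  then have kL: "\<kappa> \<le> L + 1" using L_eq klk by linarith
  have "\<kappa> * ln 4 \<le> \<kappa> * 3" using k l4 by (intro mult_left_mono) auto
  then have xb: "x \<le> 3 * L + 3" using x_eq L_eq klk kL by linarith
  have x0: "x \<ge> 0" unfolding x_def using k nu by (intro mult_nonneg_nonneg) auto
  have Dx: "real (nat \<lceil>x\<rceil>) \<le> x + 1" using x0 by linarith
  have db: "1 + 2 * real (nat \<lceil>x\<rceil>) \<le> 9 * (L + 1)"
  proof -
    obtain D where D: "D = real (nat \<lceil>x\<rceil>)" by blast
    have a1: "2*D \<le> 2*x + 2" using Dx[folded D] by linarith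
    have a2: "2*x \<le> 6*L + 6" using xb by linarith
    have a3: "0 \<le> L" using kL k by linarith
    have "1 + 2 * D \<le> 9 * (L + 1)" using a1 a2 a3 by (simp add: algebra_simps)
    then show ?thesis using D by simp
  qed
  have "real (K + 2*K*nat \<lceil>x\<rceil>) = real K * (1 + 2 * real (nat \<lceil>x\<rceil>))" by (simp add: algebra_simps)
  also have "\<dots> \<le> real K * (9 * (L + 1))" using db by (intro mult_left_mono) auto
  finally show ?thesis unfolding x_def L_def by (simp add: algebra_simps)
qed

lemma ansatz_lin: assumes b: "b \<in> carrier_vec N" and i: "i < N"
  shows "(circ N K c *\<^sub>v ansatz N T \<beta> b) $ i
       = (\<Sum>m\<in>{-int T..int T}. \<beta> m * (circ N K c *\<^sub>v (Qpow N m *\<^sub>v b)) $ i)"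
proof -
  have "(circ N K c *\<^sub>v ansatz N T \<beta> b) $ i = (\<Sum>k<N. circ N K c $$ (i,k) * ansatz N T \<beta> b $ k)"
    by (rule mult_vec_idx[OF circ_carrier ansatz_carrier i])
  also have "\<dots> = (\<Sum>k<N. \<Sum>m\<in>{-int T..int T}. \<beta> m * (circ N K c $$ (i,k) * (Qpow N m *\<^sub>v b) $ k))"
    by (intro sum.cong refl) (simp add: ansatz_def sum_distrib_left mult_ac)
  also have "\<dots> = (\<Sum>m\<in>{-int T..int T}. \<Sum>k<N. \<beta> m * (circ N K c $$ (i,k) * (Qpow N m *\<^sub>v b) $ k))"
    by (rule sum.swap)
  also have "\<dots> = (\<Sum>m\<in>{-int T..int T}. \<beta> m * (circ N K c *\<^sub>v (Qpow N m *\<^sub>v b)) $ i)"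
  proof (intro sum.cong refl)
    fix m
    have "Qpow N m *\<^sub>v b \<in> carrier_vec N" by (rule mult_mat_vec_carrier[OF Qpow_carrier b])
    then show "(\<Sum>k<N. \<beta> m * (circ N K c $$ (i,k) * (Qpow N m *\<^sub>v b) $ k)) = \<beta> m * (circ N K c *\<^sub>v (Qpow N m *\<^sub>v b)) $ i"
      by (simp add: mult_vec_idx[OF circ_carrier _ i] sum_distrib_left)
  qed
  finally show ?thesis .
qed

lemma vnorm_ansatz: assumes b: "b \<in> carrier_vec N"
  shows "(vnorm (circ N K c *\<^sub>v ansatz N T \<beta> b - b))\<^sup>2
     = nrm N (\<lambda>i. b $ i - (\<Sum>m\<in>{-int T..int T}. \<beta> m * (circ N K c *\<^sub>v (Qpow N m *\<^sub>v b)) $ i))"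
proof -
  have c: "circ N K c *\<^sub>v ansatz N T \<beta> b - b \<in> carrier_vec N" using b by simp
  have "(vnorm (circ N K c *\<^sub>v ansatz N T \<beta> b - b))\<^sup>2 = (\<Sum>i<N. (cmod ((circ N K c *\<^sub>v ansatz N T \<beta> b - b) $ i))\<^sup>2)"
    by (rule vnorm_sq[OF c])
  also have "\<dots> = nrm N (\<lambda>i. b $ i - (\<Sum>m\<in>{-int T..int T}. \<beta> m * (circ N K c *\<^sub>v (Qpow N m *\<^sub>v b)) $ i))"
    unfolding nrm_def
  proof (intro sum.cong refl)
    fix i assume "i \<in> {..<N}"
    then have i: "i < N" by simp
    have "(circ N K c *\<^sub>v ansatz N T \<beta> b - b) $ i = (circ N K c *\<^sub>v ansatz N T \<beta> b) $ i - b $ i"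
      using i b by simp
    then show "(cmod ((circ N K c *\<^sub>v ansatz N T \<beta> b - b) $ i))\<^sup>2 = (cmod (b $ i - (\<Sum>m\<in>{-int T..int T}. \<beta> m * (circ N K c *\<^sub>v (Qpow N m *\<^sub>v b)) $ i)))\<^sup>2"
      using ansatz_lin[OF b i] by (simp add: norm_minus_commute)
  qed
  finally show ?thesis .
qed

lemma opt_exists: assumes b: "b \<in> carrier_vec N"
  shows "\<exists>\<alpha>. \<forall>\<beta>. (vnorm (circ N K c *\<^sub>v ansatz N T \<alpha> b - b))\<^sup>2 \<le> (vnorm (circ N K c *\<^sub>v ansatz N T \<beta> b - b))\<^sup>2"
proof -
  obtain \<alpha> where a: "\<forall>\<gamma>. nrm N (\<lambda>i. b $ i - (\<Sum>m\<in>{-int T..int T}. \<alpha> m * (circ N K c *\<^sub>v (Qpow N m *\<^sub>v b)) $ i))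
      \<le> nrm N (\<lambda>i. b $ i - (\<Sum>m\<in>{-int T..int T}. \<gamma> m * (circ N K c *\<^sub>v (Qpow N m *\<^sub>v b)) $ i))"
    using lsq_exists[of "{-int T..int T}" N "($) b" "\<lambda>m i. (circ N K c *\<^sub>v (Qpow N m *\<^sub>v b)) $ i"] by auto
  show ?thesis using a by (intro exI[of _ \<alpha>]) (simp add: vnorm_ansatz[OF b])
qed

lemma resid_key:
  assumes N: "N > 0" and bc: "b \<in> carrier_vec N" and bn: "vnorm b = 1" and nu: "0 \<le> \<nu>"
    and tgt: "\<And>j. j < N \<Longrightarrow> lam N K c j \<noteq> 0 \<Longrightarrow> (cmod (lam N K c j * amp N T \<alpha> j - 1))\<^sup>2 \<le> \<nu>"
    and x: "x \<in> carrier_vec N"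
  shows "(vnorm (circ N K c *\<^sub>v ansatz N T \<alpha> b - b))\<^sup>2 \<le> (vnorm (circ N K c *\<^sub>v x - b))\<^sup>2 + \<nu>"
proof -
  define B where "B j = dft N (($) b) j" for j
  define X where "X j = dft N (($) x) j" for j
  define Z where "Z j = (if lam N K c j = 0 then (cmod (B j))\<^sup>2 else 0)" for j
  have R1: "(vnorm (circ N K c *\<^sub>v ansatz N T \<alpha> b - b))\<^sup>2
      = (\<Sum>j<N. (cmod (lam N K c j * amp N T \<alpha> j - 1))\<^sup>2 * (cmod (B j))\<^sup>2) / real N"
  proof -
    have "(vnorm (circ N K c *\<^sub>v ansatz N T \<alpha> b - b))\<^sup>2
      = (\<Sum>j<N. (cmod (lam N K c j * dft N (($) (ansatz N T \<alpha> b)) j - B j))\<^sup>2) / real N"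
      unfolding B_def by (rule resid_dft[OF ansatz_carrier bc N])
    also have "\<dots> = (\<Sum>j<N. (cmod (lam N K c j * amp N T \<alpha> j - 1))\<^sup>2 * (cmod (B j))\<^sup>2) / real N"
    proof -
      have "(cmod (lam N K c j * dft N (($) (ansatz N T \<alpha> b)) j - B j))\<^sup>2
          = (cmod (lam N K c j * amp N T \<alpha> j - 1))\<^sup>2 * (cmod (B j))\<^sup>2" for j
      proof -
        have "lam N K c j * dft N (($) (ansatz N T \<alpha> b)) j - B j = (lam N K c j * amp N T \<alpha> j - 1) * B j"
          unfolding dft_ansatz[OF bc] B_def by (simp add: algebra_simps)
        then show ?thesis by (simp add: norm_mult power_mult_distrib)
      qed
      then show ?thesis by simp
    qed
    finally show ?thesis .
  qed
  have R2: "(vnorm (circ N K c *\<^sub>v x - b))\<^sup>2 = (\<Sum>j<N. (cmod (lam N K c j * X j - B j))\<^sup>2) / real N"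
    unfolding B_def X_def by (rule resid_dft[OF x bc N])
  have Bs: "(\<Sum>j<N. (cmod (B j))\<^sup>2) = real N"
  proof -
    have "1 = (\<Sum>j<N. (cmod (B j))\<^sup>2) / real N" using vnorm_dft[OF bc N] bn unfolding B_def by simp
    then show ?thesis using N by (simp add: field_simps)
  qed
  have t1: "(cmod (lam N K c j * amp N T \<alpha> j - 1))\<^sup>2 * (cmod (B j))\<^sup>2 \<le> Z j + \<nu> * (cmod (B j))\<^sup>2" if j: "j < N" for j
  proof (cases "lam N K c j = 0")
    case True then show ?thesis using nu by (simp add: Z_def)
  next
    case False
    have "(cmod (lam N K c j * amp N T \<alpha> j - 1))\<^sup>2 * (cmod (B j))\<^sup>2 \<le> \<nu> * (cmod (B j))\<^sup>2"
      using tgt[OF j False] by (intro mult_right_mono) auto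
    then show ?thesis using False by (simp add: Z_def)
  qed
  have t2: "Z j \<le> (cmod (lam N K c j * X j - B j))\<^sup>2" for j
    by (simp add: Z_def)
  have "(\<Sum>j<N. (cmod (lam N K c j * amp N T \<alpha> j - 1))\<^sup>2 * (cmod (B j))\<^sup>2) \<le> (\<Sum>j<N. Z j + \<nu> * (cmod (B j))\<^sup>2)"
    using t1 by (intro sum_mono) simp
  also have "\<dots> = (\<Sum>j<N. Z j) + \<nu> * real N"
    by (simp add: sum.distrib sum_distrib_left[symmetric] Bs)
  also have "\<dots> \<le> (\<Sum>j<N. (cmod (lam N K c j * X j - B j))\<^sup>2) + \<nu> * real N"
    using t2 by (intro add_right_mono sum_mono) simp
  finally have S: "(\<Sum>j<N. (cmod (lam N K c j * amp N T \<alpha> j - 1))\<^sup>2 * (cmod (B j))\<^sup>2)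
      \<le> (\<Sum>j<N. (cmod (lam N K c j * X j - B j))\<^sup>2) + \<nu> * real N" .
  have "(\<Sum>j<N. (cmod (lam N K c j * amp N T \<alpha> j - 1))\<^sup>2 * (cmod (B j))\<^sup>2) / real N
      \<le> ((\<Sum>j<N. (cmod (lam N K c j * X j - B j))\<^sup>2) + \<nu> * real N) / real N"
    using S N by (intro divide_right_mono) auto
  also have "\<dots> = (\<Sum>j<N. (cmod (lam N K c j * X j - B j))\<^sup>2) / real N + \<nu>"
    using N by (simp add: add_divide_distrib)
  finally show ?thesis using R1 R2 by simp
qed

theorem proposition1:
  shows "\<exists>c0 > (0::real). \<forall>(N::nat) (K::nat) (c::int \<Rightarrow> complex) (b::complex vec) (\<nu>::real).
    N > 0 \<longrightarrow> 0 < \<nu> \<longrightarrow> \<nu> \<le> 1 \<longrightarrow> circ N K c \<noteq> 0\<^sub>m N N \<longrightarrow>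
    b \<in> carrier_vec N \<longrightarrow> vnorm b = 1 \<longrightarrow>
    (\<exists>T::nat. real T \<le> c0 * real K * (cond_num (circ N K c) * ln (cond_num (circ N K c) / \<nu>) + 1) \<and>
      (\<exists>\<alpha>::int \<Rightarrow> complex.
         (\<forall>\<beta>::int \<Rightarrow> complex.
            (vnorm (circ N K c *\<^sub>v ansatz N T \<alpha> b - b))\<^sup>2 \<le> (vnorm (circ N K c *\<^sub>v ansatz N T \<beta> b - b))\<^sup>2) \<and>
         (\<forall>x \<in> carrier_vec N.
            (vnorm (circ N K c *\<^sub>v ansatz N T \<alpha> b - b))\<^sup>2 \<le> (vnorm (circ N K c *\<^sub>v x - b))\<^sup>2 + \<nu>)))"
proof (intro exI[of _ "9::real"] conjI allI impI)
  show "(0::real) < 9" by simp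
  fix N K :: nat and c :: "int \<Rightarrow> complex" and b :: "complex vec" and \<nu> :: real
  assume N: "N > 0" and nu0: "0 < \<nu>" and nu1: "\<nu> \<le> 1" and Cnz: "circ N K c \<noteq> 0\<^sub>m N N"
    and bc: "b \<in> carrier_vec N" and bn: "vnorm b = 1"
  define S where "S = (\<lambda>j. cmod (lam N K c j)) ` {..<N}"
  have SV: "singular_values (circ N K c) = S" unfolding S_def by (rule singular_values_circ[OF N])
  have finS: "finite S" unfolding S_def by simp
  obtain j0 where j0: "j0 < N" "lam N K c j0 \<noteq> 0" using circ_nonzero_lam[OF Cnz] by blast
  have j0S: "cmod (lam N K c j0) \<in> S - {0}" using j0 unfolding S_def by auto
  define M where "M = Max S"
  define m where "m = Min (S - {0})"
  have finZ: "finite (S - {0})" using finS by simp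
  have Zne: "S - {0} \<noteq> {}" using j0S by blast
  have m_in: "m \<in> S - {0}" unfolding m_def using finZ Zne by (rule Min_in)
  have m_pos: "m > 0"
  proof -
    obtain j where "m = cmod (lam N K c j)" using m_in unfolding S_def by auto
    then show ?thesis using m_in by simp
  qed
  have mM: "m \<le> M" unfolding M_def using finS m_in by (intro Max_ge) auto
  have bnd: "m \<le> cmod (lam N K c j) \<and> cmod (lam N K c j) \<le> M" if "j < N" "lam N K c j \<noteq> 0" for j
  proof
    have "cmod (lam N K c j) \<in> S - {0}" using that unfolding S_def by auto
    then show "m \<le> cmod (lam N K c j)" unfolding m_def using finZ by (intro Min_le) auto
    show "cmod (lam N K c j) \<le> M" unfolding M_def using finS that unfolding S_def by (intro Max_ge) auto
  qed
  have kap: "cond_num (circ N K c) = M / m"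
    unfolding cond_num_def sigma_max_def sigma_min_def SV M_def m_def ..
  define \<kappa> where "\<kappa> = M / m"
  have k1: "\<kappa> \<ge> 1" unfolding \<kappa>_def using m_pos mM by simp
  define d where "d = nat \<lceil>\<kappa> * ln (4/\<nu>)\<rceil>"
  define T where "T = K + 2*K*d"
  define u0 where "u0 = (4*M\<^sup>2 + m\<^sup>2)/(4*M\<^sup>2 - m\<^sup>2)"
  define g where "g = 2/(4*M\<^sup>2 - m\<^sup>2)"
  define tt where "tt j = (cmod (lam N K c j))\<^sup>2" for j
  define q where "q = cheb d u0"
  have dge: "real d \<ge> (M/m) * ln (4/\<nu>)" unfolding d_def \<kappa>_def by linarith
  have tt_bnd: "m\<^sup>2 \<le> tt j \<and> tt j \<le> M\<^sup>2" if "j < N" "lam N K c j \<noteq> 0" for j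
    using bnd[OF that] m_pos unfolding tt_def by (auto intro: power_mono)
  have q_pos: "q > 0" unfolding q_def
    using cheb_approx(1)[OF m_pos mM nu0 _ _ dge u0_def g_def, of "m\<^sup>2"] mM m_pos by (simp add: power_mono)
  define target where "target j = cnj (lam N K c j) * (complex_of_real (1/q) * complex_of_real (chS u0 g d (tt j)))" for j
  have LPu: "LP N (2*K) (\<lambda>j. complex_of_real (u0 - g * tt j))"
  proof -
    have "LP N (2*K) (\<lambda>j. complex_of_real u0 - complex_of_real g * complex_of_real (tt j))"
      using LP_t[of N K c] unfolding tt_def by (intro LP_diff LP_const LP_scale)
    then show ?thesis by (rule LP_cong) simp
  qed
  have "LP N (K + 2*K*d) target"
    unfolding target_def by (intro LP_mult LP_cnj_lam LP_scale LP_chS[OF LPu])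
  then obtain \<alpha> where \<alpha>: "\<forall>j<N. target j = amp N T \<alpha> j" unfolding LP_def T_def by blast
  have tgt: "(cmod (lam N K c j * amp N T \<alpha> j - 1))\<^sup>2 \<le> \<nu>" if j: "j < N" and nz: "lam N K c j \<noteq> 0" for j
  proof -
    have lt: "lam N K c j * cnj (lam N K c j) = complex_of_real (tt j)"
      unfolding tt_def by (rule complex_norm_square[symmetric])
    have "lam N K c j * amp N T \<alpha> j = lam N K c j * target j" using \<alpha> j by simp
    also have "\<dots> = complex_of_real (tt j * chS u0 g d (tt j) / q)"
      unfolding target_def by (simp add: mult.assoc[symmetric] lt)
    also have "tt j * chS u0 g d (tt j) = q - cheb d (u0 - g * tt j)"
      unfolding q_def by (rule chS_id)
    finally have "lam N K c j * amp N T \<alpha> j - 1 = - complex_of_real (cheb d (u0 - g * tt j) / q)"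
      using q_pos by (simp add: diff_divide_distrib)
    then have "(cmod (lam N K c j * amp N T \<alpha> j - 1))\<^sup>2 = (cmod (complex_of_real (cheb d (u0 - g * tt j) / q)))\<^sup>2"
      by (simp only: norm_minus_cancel)
    also have "\<dots> = (cheb d (u0 - g * tt j) / q)\<^sup>2" by (simp only: norm_of_real power2_abs)
    also have "\<dots> \<le> \<nu>" unfolding q_def
      using cheb_approx(2)[OF m_pos mM nu0 _ _ dge u0_def g_def, of "tt j"] tt_bnd[OF j nz] by simp
    finally show ?thesis .
  qed
  have key: "(vnorm (circ N K c *\<^sub>v ansatz N T \<alpha> b - b))\<^sup>2 \<le> (vnorm (circ N K c *\<^sub>v x - b))\<^sup>2 + \<nu>"
    if "x \<in> carrier_vec N" for x :: "complex vec"
    using resid_key[OF N bc bn _ tgt that] nu0 by simp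
  obtain \<alpha>' where \<alpha>': "\<forall>\<beta>. (vnorm (circ N K c *\<^sub>v ansatz N T \<alpha>' b - b))\<^sup>2 \<le> (vnorm (circ N K c *\<^sub>v ansatz N T \<beta> b - b))\<^sup>2"
    using opt_exists[OF bc] by blast
  have Tb: "real T \<le> 9 * real K * (cond_num (circ N K c) * ln (cond_num (circ N K c) / \<nu>) + 1)"
    unfolding T_def d_def kap \<kappa>_def[symmetric] by (rule T_bound[OF k1 nu0 nu1])
  show "\<exists>T. real T \<le> 9 * real K * (cond_num (circ N K c) * ln (cond_num (circ N K c) / \<nu>) + 1) \<and>
      (\<exists>\<alpha>. (\<forall>\<beta>. (vnorm (circ N K c *\<^sub>v ansatz N T \<alpha> b - b))\<^sup>2 \<le> (vnorm (circ N K c *\<^sub>v ansatz N T \<beta> b - b))\<^sup>2) \<and>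
         (\<forall>x\<in>carrier_vec N. (vnorm (circ N K c *\<^sub>v ansatz N T \<alpha> b - b))\<^sup>2 \<le> (vnorm (circ N K c *\<^sub>v x - b))\<^sup>2 + \<nu>))"
  proof (intro exI[of _ T] conjI exI[of _ \<alpha>'] ballI)
    show "real T \<le> 9 * real K * (cond_num (circ N K c) * ln (cond_num (circ N K c) / \<nu>) + 1)" by (rule Tb)
    show "\<forall>\<beta>. (vnorm (circ N K c *\<^sub>v ansatz N T \<alpha>' b - b))\<^sup>2 \<le> (vnorm (circ N K c *\<^sub>v ansatz N T \<beta> b - b))\<^sup>2"
      by (rule \<alpha>')
    fix x :: "complex vec" assume x: "x \<in> carrier_vec N"
    have "(vnorm (circ N K c *\<^sub>v ansatz N T \<alpha>' b - b))\<^sup>2 \<le> (vnorm (circ N K c *\<^sub>v ansatz N T \<alpha> b - b))\<^sup>2"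
      using \<alpha>' by blast
    also have "\<dots> \<le> (vnorm (circ N K c *\<^sub>v x - b))\<^sup>2 + \<nu>" by (rule key[OF x])
    finally show "(vnorm (circ N K c *\<^sub>v ansatz N T \<alpha>' b - b))\<^sup>2 \<le> (vnorm (circ N K c *\<^sub>v x - b))\<^sup>2 + \<nu>" .
  qed
qed


end
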